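(* In the algebra $\mathcal O_q$ defined in the context, the following relations hold for all integers $k\ge1$: $[\tilde{\mathcal G}_{k+1},\mathcal W_0]=\dfrac{[\mathcal W_0,[\mathcal W_0,[\mathcal W_1,\tilde{\mathcal G}_k]_q]_q]}{(q^2-q^{-2})^2}$ and $[\mathcal W_1,\tilde{\mathcal G}_{k+1}]=\dfrac{[[[\tilde{\mathcal G}_k,\mathcal W_0]_q,\mathcal W_1]_q,\mathcal W_1]}{(q^2-q^{-2})^2}$.
   Context: All algebras are associative and unital over a field $\mathbb F$; $q\in\mathbb F$ is nonzero and not a root of unity. For elements $X,Y$ of an algebra, $[X,Y]=XY-YX$ and $[X,Y]_q=qXY-q^{-1}YX$. Let $\rho=-(q^2-q^{-2})^2$. The algebra $\mathcal O_q$ is defined by generators $\mathcal W_{-k},\mathcal W_{k+1},\mathcal G_{k+1},\tilde{\mathcal G}_{k+1}$ ($k\in\mathbb N$) and the following relations for all $k,\ell\in\mathbb N$: $[\mathcal W_0,\mathcal W_{k+1}]=[\mathcal W_{-k},\mathcal W_1]=(\tilde{\mathcal G}_{k+1}-\mathcal G_{k+1})/(q+q^{-1})$; $[\mathcal W_0,\mathcal G_{k+1}]_q=[\tilde{\mathcal G}_{k+1},\mathcal W_0]_q=\rho\mathcal W_{-k-1}-\rho\mathcal W_{k+1}$; $[\mathcal G_{k+1},\mathcal W_1]_q=[\mathcal W_1,\tilde{\mathcal G}_{k+1}]_q=\rho\mathcal W_{k+2}-\rho\mathcal W_{-k}$; $[\mathcal W_{-k},\mathcal W_{-\ell}]=0$,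 $[\mathcal W_{k+1},\mathcal W_{\ell+1}]=0$; $[\mathcal W_{-k},\mathcal W_{\ell+1}]+[\mathcal W_{k+1},\mathcal W_{-\ell}]=0$; $[\mathcal W_{-k},\mathcal G_{\ell+1}]+[\mathcal G_{k+1},\mathcal W_{-\ell}]=0$; $[\mathcal W_{-k},\tilde{\mathcal G}_{\ell+1}]+[\tilde{\mathcal G}_{k+1},\mathcal W_{-\ell}]=0$; $[\mathcal W_{k+1},\mathcal G_{\ell+1}]+[\mathcal G_{k+1},\mathcal W_{\ell+1}]=0$; $[\mathcal W_{k+1},\tilde{\mathcal G}_{\ell+1}]+[\tilde{\mathcal G}_{k+1},\mathcal W_{\ell+1}]=0$; $[\mathcal G_{k+1},\mathcal G_{\ell+1}]=0$, $[\tilde{\mathcal G}_{k+1},\tilde{\mathcal G}_{\ell+1}]=0$; $[\tilde{\mathcal G}_{k+1},\mathcal G_{\ell+1}]+[\mathcal G_{k+1},\tilde{\mathcal G}_{\ell+1}]=0$. *)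

theory Defs
  imports Main
begin

text \<open>An associative unital algebra over a field 'k is a ring 'a together with a
  unital ring homomorphism from 'k into the centre of 'a (the structure map);
  scalar multiplication c.x is then (sm c * x).\<close>

definition alg_structure_map :: "('k::field \<Rightarrow> 'a::ring_1) \<Rightarrow> bool" where
  "alg_structure_map sm \<longleftrightarrow>
     (\<forall>a b. sm (a + b) = sm a + sm b) \<and>
     (\<forall>a b. sm (a * b) = sm a * sm b) \<and>
     sm 1 = 1 \<and>
     (\<forall>c x. sm c * x = x * sm c)"

definition comm :: "'a::ring \<Rightarrow> 'a \<Rightarrow> 'a" where
  "comm X Y = X * Y - Y * X"

definition qcomm :: "('k::field \<Rightarrow> 'a::ring_1) \<Rightarrow> 'k \<Rightarrow> 'a \<Rightarrow> 'a \<Rightarrow> 'a" where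
  "qcomm sm q X Y = sm q * X * Y - sm (inverse q) * Y * X"

definition rho :: "'k::field \<Rightarrow> 'k" where
  "rho q = - ((q^2 - inverse (q^2))^2)"

text \<open>Defining relations of O_q, for elements W (indexed by all integers:
  W j stands for \<W>_j), G j = \<G>_j and Gt j = \<tilde>\<G>_j (only indices j \<ge> 1 matter).\<close>
definition Oq_relations ::
  "('k::field \<Rightarrow> 'a::ring_1) \<Rightarrow> 'k \<Rightarrow> (int \<Rightarrow> 'a) \<Rightarrow> (nat \<Rightarrow> 'a) \<Rightarrow> (nat \<Rightarrow> 'a) \<Rightarrow> bool" where
  "Oq_relations sm q W G Gt \<longleftrightarrow>
   (\<forall>k l :: nat.
      comm (W 0) (W (int k + 1)) = sm (inverse (q + inverse q)) * (Gt (k+1) - G (k+1)) \<and>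
      comm (W (- int k)) (W 1) = sm (inverse (q + inverse q)) * (Gt (k+1) - G (k+1)) \<and>
      qcomm sm q (W 0) (G (k+1)) = sm (rho q) * W (- int k - 1) - sm (rho q) * W (int k + 1) \<and>
      qcomm sm q (Gt (k+1)) (W 0) = sm (rho q) * W (- int k - 1) - sm (rho q) * W (int k + 1) \<and>
      qcomm sm q (G (k+1)) (W 1) = sm (rho q) * W (int k + 2) - sm (rho q) * W (- int k) \<and>
      qcomm sm q (W 1) (Gt (k+1)) = sm (rho q) * W (int k + 2) - sm (rho q) * W (- int k) \<and>
      comm (W (- int k)) (W (- int l)) = 0 \<and>
      comm (W (int k + 1)) (W (int l + 1)) = 0 \<and>
      comm (W (- int k)) (W (int l + 1)) + comm (W (int k + 1)) (W (- int l)) = 0 \<and>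
      comm (W (- int k)) (G (l+1)) + comm (G (k+1)) (W (- int l)) = 0 \<and>
      comm (W (- int k)) (Gt (l+1)) + comm (Gt (k+1)) (W (- int l)) = 0 \<and>
      comm (W (int k + 1)) (G (l+1)) + comm (G (k+1)) (W (int l + 1)) = 0 \<and>
      comm (W (int k + 1)) (Gt (l+1)) + comm (Gt (k+1)) (W (int l + 1)) = 0 \<and>
      comm (G (k+1)) (G (l+1)) = 0 \<and>
      comm (Gt (k+1)) (Gt (l+1)) = 0 \<and>
      comm (Gt (k+1)) (G (l+1)) + comm (G (k+1)) (Gt (l+1)) = 0)"

end

theory Submission
  imports Defs
begin

lemma sm_central: "alg_structure_map sm \<Longrightarrow> sm c * x = x * sm c"
  unfolding alg_structure_map_def by metis

lemma sm_mult: "alg_structure_map sm \<Longrightarrow> sm a * sm b = sm (a * b)"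
  unfolding alg_structure_map_def by metis

lemma sm_add: "alg_structure_map sm \<Longrightarrow> sm a + sm b = sm (a + b)"
  unfolding alg_structure_map_def by metis

lemma sm_one: "alg_structure_map sm \<Longrightarrow> sm 1 = 1"
  unfolding alg_structure_map_def by metis

lemma sm_zero: "alg_structure_map sm \<Longrightarrow> sm 0 = 0"
proof -
  assume h: "alg_structure_map sm"
  have "sm 0 + sm 0 = sm 0" using sm_add[OF h, of 0 0] by simp
  then show ?thesis by simp
qed

lemma sm_neg_one: "alg_structure_map sm \<Longrightarrow> sm (-1) = -1"
proof -
  assume h: "alg_structure_map sm"
  have "sm (-1) + sm 1 = 0" using sm_add[OF h, of "-1" 1] sm_zero[OF h] by simp
  then show ?thesis using sm_one[OF h] by (simp add: add_eq_0_iff2)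
qed

lemma sm_swap: "alg_structure_map sm \<Longrightarrow> a * (sm c * y) = sm c * (a * y)"
proof -
  assume h: "alg_structure_map sm"
  have "a * (sm c * y) = (a * sm c) * y" by (simp only: mult.assoc)
  also have "a * sm c = sm c * a" using sm_central[OF h] by simp
  finally show ?thesis by (simp only: mult.assoc)
qed

lemma comm_smul: "alg_structure_map sm \<Longrightarrow> comm a (sm c * y) = sm c * comm a y"
  unfolding comm_def by (simp add: sm_swap mult.assoc right_diff_distrib)

lemma comm_smul_l: "alg_structure_map sm \<Longrightarrow> comm (sm c * y) b = sm c * comm y b"
  unfolding comm_def by (simp add: sm_swap mult.assoc right_diff_distrib)

lemma sm_swap2: "alg_structure_map sm \<Longrightarrow> d * (sm c * y) * a = sm c * (d * y * a)"
proof -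
  assume h: "alg_structure_map sm"
  have e: "d * (sm c * y) = sm c * (d * y)" by (rule sm_swap[OF h])
  have "d * (sm c * y) * a = (sm c * (d * y)) * a" by (simp only: e)
  also have "\<dots> = sm c * (d * y * a)" by (simp only: mult.assoc)
  finally show ?thesis .
qed

lemma qcomm_smul: "alg_structure_map sm \<Longrightarrow> qcomm sm q a (sm c * y) = sm c * qcomm sm q a y"
proof -
  assume h: "alg_structure_map sm"
  have 1: "sm q * a * (sm c * y) = sm c * (sm q * a * y)"
    by (rule sm_swap[OF h])
  have 2: "sm (inverse q) * (sm c * y) * a = sm c * (sm (inverse q) * y * a)"
    by (rule sm_swap2[OF h])
  show ?thesis unfolding qcomm_def 1 2 by (simp only: right_diff_distrib)
qed

lemma qcomm_smul_l: "alg_structure_map sm \<Longrightarrow> qcomm sm q (sm c * y) b = sm c * qcomm sm q y b"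
proof -
  assume h: "alg_structure_map sm"
  have 1: "sm q * (sm c * y) * b = sm c * (sm q * y * b)"
    by (rule sm_swap2[OF h])
  have 2: "sm (inverse q) * b * (sm c * y) = sm c * (sm (inverse q) * b * y)"
    by (rule sm_swap[OF h])
  show ?thesis unfolding qcomm_def 1 2 by (simp only: right_diff_distrib)
qed

lemma comm_diff: "comm a (y - z) = comm a y - comm a z"
  unfolding comm_def by (simp add: algebra_simps)

lemma comm_diff_l: "comm (y - z) b = comm y b - comm z b"
  unfolding comm_def by (simp add: algebra_simps)

lemma qcomm_diff: "qcomm sm q a (y - z) = qcomm sm q a y - qcomm sm q a z"
  unfolding qcomm_def by (simp add: algebra_simps)

lemma qcomm_diff_l: "qcomm sm q (y - z) b = qcomm sm q y b - qcomm sm q z b"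
  unfolding qcomm_def by (simp add: algebra_simps)

lemma qcomm_zero: "qcomm sm q a 0 = 0" "qcomm sm q 0 b = 0"
  unfolding qcomm_def by simp_all

lemma comm_qcomm: "alg_structure_map sm \<Longrightarrow> comm a (qcomm sm q a y) = qcomm sm q a (comm a y)"
proof -
  assume h: "alg_structure_map sm"
  have "a * (sm q * a * y) = sm q * a * a * y" using h by (simp add: sm_swap mult.assoc)
  moreover have "a * (sm (inverse q) * y * a) = sm (inverse q) * a * y * a" using h by (simp add: sm_swap mult.assoc)
  ultimately show ?thesis unfolding qcomm_def comm_def by (simp add: algebra_simps)
qed

lemma comm_qcomm_l: "alg_structure_map sm \<Longrightarrow> comm (qcomm sm q y b) b = qcomm sm q (comm y b) b"
proof -
  assume h: "alg_structure_map sm"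
  have "b * (sm q * y * b) = sm q * b * y * b" using h by (simp add: sm_swap mult.assoc)
  moreover have "b * (sm (inverse q) * b * y) = sm (inverse q) * b * b * y" using h by (simp add: sm_swap mult.assoc)
  ultimately show ?thesis unfolding qcomm_def comm_def by (simp add: algebra_simps)
qed

lemma qcomm_swap: "qcomm sm q a x - qcomm sm q x a = (sm q + sm (inverse q)) * comm a x"
  unfolding qcomm_def comm_def by (simp add: algebra_simps)

lemma comm_anti: "comm a b = - comm b a"
  unfolding comm_def by simp

lemma scalars:
  fixes q :: "'k::field"
  assumes "q \<noteq> 0" "\<forall>n::nat. n > 0 \<longrightarrow> q ^ n \<noteq> 1"
  shows "inverse (q + inverse q) * (q + inverse q) = 1"
    "inverse ((q^2 - inverse (q^2))^2) * rho q = -1"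
proof -
  have q4: "q ^ 4 \<noteq> 1" using assms(2) by auto
  have "q + inverse q \<noteq> 0"
  proof
    assume "q + inverse q = 0"
    then have "q * (q + inverse q) = 0" by simp
    then have "q * q = -1" using assms(1) by (simp add: distrib_left eq_neg_iff_add_eq_0)
    moreover have "q ^ 4 = (q * q) * (q * q)" by (simp add: power4_eq_xxxx mult.assoc)
    ultimately have "q ^ 4 = 1" by simp
    with q4 show False by simp
  qed
  then show "inverse (q + inverse q) * (q + inverse q) = 1" by simp
  have "q^2 - inverse (q^2) \<noteq> 0"
  proof
    assume "q^2 - inverse (q^2) = 0"
    then have "q^2 * q^2 = q^2 * inverse (q^2)" by simp
    then have "q ^ 4 = 1" using assms(1) by (simp add: power4_eq_xxxx power2_eq_square mult.assoc)
    with q4 show False by simp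
  qed
  then show "inverse ((q^2 - inverse (q^2))^2) * rho q = -1" unfolding rho_def by simp
qed

theorem lemma6p1:
  fixes sm :: "'k::field \<Rightarrow> 'a::ring_1"
    and q :: 'k
    and W :: "int \<Rightarrow> 'a" and G Gt :: "nat \<Rightarrow> 'a"
  assumes "alg_structure_map sm"
    and "q \<noteq> 0"
    and "\<forall>n::nat. n > 0 \<longrightarrow> q ^ n \<noteq> 1"
    and "Oq_relations sm q W G Gt"
    and "k \<ge> 1"
  shows "comm (Gt (k+1)) (W 0) =
           sm (inverse ((q^2 - inverse (q^2))^2)) *
             comm (W 0) (qcomm sm q (W 0) (qcomm sm q (W 1) (Gt k))) \<and>
         comm (W 1) (Gt (k+1)) =
           sm (inverse ((q^2 - inverse (q^2))^2)) *
             comm (qcomm sm q (qcomm sm q (Gt k) (W 0)) (W 1)) (W 1)"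
proof -
  note h = assms(1)
  note R = assms(4)[unfolded Oq_relations_def, rule_format]
  obtain m where km: "k = m + 1" using assms(5) by (cases k) auto
  define c where "c = sm (inverse (q + inverse q))"
  define r where "r = sm (rho q)"
  define d where "d = sm (inverse ((q^2 - inverse (q^2))^2))"
  define X where "X = Gt (m+2)"
  define Y where "Y = G (m+2)"
  have cst: "c * (sm q + sm (inverse q)) = 1"
    unfolding c_def sm_add[OF h] sm_mult[OF h] scalars(1)[OF assms(2,3)] sm_one[OF h] ..
  have dr: "d * r = -1"
    unfolding d_def r_def sm_mult[OF h] scalars(2)[OF assms(2,3)] sm_neg_one[OF h] ..
  have r1: "qcomm sm q (W 1) (Gt (m+1)) = r * W (int m + 2) - r * W (- int m)"
    using R[of m 0] unfolding r_def by simp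
  have r2: "comm (W (- int m)) (W 0) = 0"
    using R[of m 0] by simp
  have r3: "qcomm sm q (Gt (m+1)) (W 0) = r * W (- int m - 1) - r * W (int m + 1)"
    using R[of m 0] unfolding r_def by simp
  have r4: "comm (W (int m + 1)) (W 1) = 0"
    using R[of m 0] by simp
  have i1: "int (m+1) + 1 = int m + 2" "- int (m+1) = - int m - 1" "m + 1 + 1 = m + 2" by simp_all
  note RR = R[of "m+1" 0, unfolded i1]
  have c1: "comm (W 0) (W (int m + 2)) = c * (X - Y)"
    using RR unfolding c_def X_def Y_def by (elim conjE) assumption
  have c2: "comm (W (- int m - 1)) (W 1) = c * (X - Y)"
    using RR unfolding c_def X_def Y_def by (elim conjE) assumption
  have c34: "qcomm sm q (W 0) Y = qcomm sm q X (W 0)"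
  proof -
    have e: "qcomm sm q (W 0) (G (m+2)) = sm (rho q) * W (- int m - 1 - 1) - sm (rho q) * W (int m + 2)"
      using RR by (elim conjE) assumption
    have f: "qcomm sm q (Gt (m+2)) (W 0) = sm (rho q) * W (- int m - 1 - 1) - sm (rho q) * W (int m + 2)"
      using RR by (elim conjE) assumption
    show ?thesis using e f unfolding X_def Y_def by simp
  qed
  have c56: "qcomm sm q Y (W 1) = qcomm sm q (W 1) X"
  proof -
    have e: "qcomm sm q (G (m+2)) (W 1) = sm (rho q) * W (int (m+1) + 2) - sm (rho q) * W (- int m - 1)"
      using RR by (elim conjE) assumption
    have f: "qcomm sm q (W 1) (Gt (m+2)) = sm (rho q) * W (int (m+1) + 2) - sm (rho q) * W (- int m - 1)"
      using RR by (elim conjE) assumption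
    show ?thesis using e f unfolding X_def Y_def by simp
  qed
  have g1: "comm (W 0) (qcomm sm q (W 0) (qcomm sm q (W 1) (Gt (m+1)))) = r * comm (W 0) X"
  proof -
    have "comm (W 0) (qcomm sm q (W 0) (W (- int m))) = 0"
      using comm_qcomm[OF h] r2 comm_anti[of "W 0" "W (- int m)"] qcomm_zero by simp
    moreover have "comm (W 0) (qcomm sm q (W 0) (W (int m + 2))) = comm (W 0) X"
    proof -
      have "comm (W 0) (qcomm sm q (W 0) (W (int m + 2))) = c * (qcomm sm q (W 0) X - qcomm sm q (W 0) Y)"
        unfolding comm_qcomm[OF h] c1 c_def qcomm_smul[OF h] qcomm_diff ..
      also have "\<dots> = (c * (sm q + sm (inverse q))) * comm (W 0) X"
        unfolding c34 qcomm_swap by (simp add: mult.assoc)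
      finally show ?thesis using cst by simp
    qed
    ultimately show ?thesis unfolding r1 r_def qcomm_diff qcomm_smul[OF h] comm_diff comm_smul[OF h] by simp
  qed
  have g2: "comm (qcomm sm q (qcomm sm q (Gt (m+1)) (W 0)) (W 1)) (W 1) = r * comm X (W 1)"
  proof -
    have "comm (qcomm sm q (W (int m + 1)) (W 1)) (W 1) = 0"
      using comm_qcomm_l[OF h] r4 qcomm_zero by simp
    moreover have "comm (qcomm sm q (W (- int m - 1)) (W 1)) (W 1) = comm X (W 1)"
    proof -
      have "comm (qcomm sm q (W (- int m - 1)) (W 1)) (W 1) = c * (qcomm sm q X (W 1) - qcomm sm q Y (W 1))"
        unfolding comm_qcomm_l[OF h] c2 c_def qcomm_smul_l[OF h] qcomm_diff_l ..
      also have "\<dots> = (c * (sm q + sm (inverse q))) * comm X (W 1)"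
        unfolding c56 qcomm_swap by (simp add: mult.assoc)
      finally show ?thesis using cst by simp
    qed
    ultimately show ?thesis unfolding r3 r_def qcomm_diff_l qcomm_smul_l[OF h] comm_diff_l comm_smul_l[OF h] by simp
  qed
  have e1: "comm (Gt (k+1)) (W 0) = d * comm (W 0) (qcomm sm q (W 0) (qcomm sm q (W 1) (Gt k)))"
  proof -
    have "d * comm (W 0) (qcomm sm q (W 0) (qcomm sm q (W 1) (Gt k))) = (d * r) * comm (W 0) X"
      using g1 km by (simp add: mult.assoc)
    also have "\<dots> = comm X (W 0)" using dr comm_anti[of "W 0" X] by simp
    finally show ?thesis using km X_def by simp
  qed
  have e2: "comm (W 1) (Gt (k+1)) = d * comm (qcomm sm q (qcomm sm q (Gt k) (W 0)) (W 1)) (W 1)"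
  proof -
    have "d * comm (qcomm sm q (qcomm sm q (Gt k) (W 0)) (W 1)) (W 1) = (d * r) * comm X (W 1)"
      using g2 km by (simp add: mult.assoc)
    also have "\<dots> = comm (W 1) X" using dr comm_anti[of X "W 1"] by simp
    finally show ?thesis using km X_def by simp
  qed
  show ?thesis using e1 e2 unfolding d_def by simp
qed

end
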